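(* Let $B_1,B_2$ be independent standard Brownian motions, $c_1,c_2\in\mathbb R$, $\gamma_1,\gamma_2\in[0,2)$, $a\le 1$. For $\varepsilon\in(0,1)$ let $A_\varepsilon=\{(t,s_1,s_2)\in[0,1]^3:\max(s_1,s_2)\le t\le\varepsilon\}$. Then for every $\delta>0$ there exists $\varepsilon=\varepsilon(\delta)\in(0,1)$ such that, as $u\to\infty$, $$\mathbb P\Big(\exists (t,s_1,s_2)\in A_\varepsilon:\ B_1(t)-c_1t-\gamma_1(B_1(s_1)-c_1s_1)>u,\ B_2(t)-c_2t-\gamma_2(B_2(s_2)-c_2s_2)>au\Big)=o\big(e^{-\delta u^2}\big).$$ *)

theory Defs
  imports "HOL-Probability.Probability" "HOL-Library.Landau_Symbols"
begin

definition standard_BM :: "'a measure \<Rightarrow> (real \<Rightarrow> 'a \<Rightarrow> real) \<Rightarrow> bool" where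
  "standard_BM M B \<longleftrightarrow>
     prob_space M \<and>
     (\<forall>t\<ge>0. B t \<in> borel_measurable M) \<and>
     (\<forall>\<omega>\<in>space M. B 0 \<omega> = 0 \<and> continuous_on {0..} (\<lambda>t. B t \<omega>)) \<and>
     (\<forall>s t. 0 \<le> s \<and> s < t \<longrightarrow>
        distributed M lborel (\<lambda>\<omega>. B t \<omega> - B s \<omega>) (normal_density 0 (sqrt (t - s)))) \<and>
     (\<forall>(n::nat) (ts::nat \<Rightarrow> real). 0 \<le> ts 0 \<and> (\<forall>i<n. ts i < ts (Suc i)) \<longrightarrow>
        prob_space.indep_vars M (\<lambda>_. borel) (\<lambda>i \<omega>. B (ts (Suc i)) \<omega> - B (ts i) \<omega>) {..<n})"

definition indep_processes :: "'a measure \<Rightarrow> (real \<Rightarrow> 'a \<Rightarrow> real) \<Rightarrow> (real \<Rightarrow> 'a \<Rightarrow> real) \<Rightarrow> bool" where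
  "indep_processes M X Y \<longleftrightarrow>
     prob_space.indep_var M
       (PiM {0..} (\<lambda>_. borel)) (\<lambda>\<omega>. \<lambda>t\<in>{0..}. X t \<omega>)
       (PiM {0..} (\<lambda>_. borel)) (\<lambda>\<omega>. \<lambda>t\<in>{0..}. Y t \<omega>)"

definition A_set :: "real \<Rightarrow> (real \<times> real \<times> real) set" where
  "A_set \<epsilon> = {(t, s1, s2). t \<in> {0..1} \<and> s1 \<in> {0..1} \<and> s2 \<in> {0..1} \<and>
                 max s1 s2 \<le> t \<and> t \<le> \<epsilon>}"

end

theory Submission imports Defs "HOL-Real_Asymp.Real_Asymp" begin

lemma nd_shift:
  fixes \<sigma> l x y :: real
  assumes "\<sigma> > 0"
  shows "normal_density 0 \<sigma> y * exp (l * y - l * x) = exp (l\<^sup>2 * \<sigma>\<^sup>2 / 2 - l * x) * normal_density (l * \<sigma>\<^sup>2) \<sigma> y"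
proof -
  have "-(y - l * \<sigma>\<^sup>2)\<^sup>2/ (2 * \<sigma>\<^sup>2) = -(y - 0)\<^sup>2/ (2 * \<sigma>\<^sup>2) + l * y - l\<^sup>2 * \<sigma>\<^sup>2 / 2"
    using assms by (simp add: power2_eq_square field_simps)
  then have e: "-(y - 0)\<^sup>2/ (2 * \<sigma>\<^sup>2) + (l * y - l * x) = (l\<^sup>2 * \<sigma>\<^sup>2 / 2 - l * x) + (-(y - l * \<sigma>\<^sup>2)\<^sup>2/ (2 * \<sigma>\<^sup>2))"
    by linarith
  have "normal_density 0 \<sigma> y * exp (l * y - l * x) = 1 / sqrt (2 * pi * \<sigma>\<^sup>2) * exp (-(y - 0)\<^sup>2/ (2 * \<sigma>\<^sup>2) + (l * y - l * x))"
    unfolding normal_density_def exp_add by simp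
  also have "\<dots> = 1 / sqrt (2 * pi * \<sigma>\<^sup>2) * exp ((l\<^sup>2 * \<sigma>\<^sup>2 / 2 - l * x) + (-(y - l * \<sigma>\<^sup>2)\<^sup>2/ (2 * \<sigma>\<^sup>2)))"
    by (simp only: e)
  also have "\<dots> = exp (l\<^sup>2 * \<sigma>\<^sup>2 / 2 - l * x) * normal_density (l * \<sigma>\<^sup>2) \<sigma> y"
    unfolding normal_density_def exp_add by simp
  finally show ?thesis .
qed

lemma nn_normal: "\<sigma> > 0 \<Longrightarrow> (\<integral>\<^sup>+y. ennreal (normal_density m \<sigma> y) \<partial>lborel) = 1"
  by (subst nn_integral_eq_integral) auto

lemma nn_normal_c: "\<sigma> > 0 \<Longrightarrow> c \<ge> 0 \<Longrightarrow> (\<integral>\<^sup>+y. ennreal (c * normal_density m \<sigma> y) \<partial>lborel) = ennreal c"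
  by (simp add: ennreal_mult nn_integral_cmult nn_normal)

lemma nd_neg: "normal_density m \<sigma> (-y) = normal_density (-m) \<sigma> y"
  unfolding normal_density_def by (simp add: power2_eq_square algebra_simps)

lemma gauss_tail:
  fixes X :: "'a \<Rightarrow> real"
  assumes d: "distributed M lborel X (normal_density 0 \<sigma>)" and s: "\<sigma> > 0" and x: "x \<ge> 0"
  shows "emeasure M {\<omega>\<in>space M. \<bar>X \<omega>\<bar> > x} \<le> ennreal (2 * exp (- x\<^sup>2 / (2 * \<sigma>\<^sup>2)))"
proof -
  define l where "l = x / \<sigma>\<^sup>2"
  have l0: "l \<ge> 0" using x s by (simp add: l_def)
  have "{\<omega>\<in>space M. \<bar>X \<omega>\<bar> > x} = X -` {y. \<bar>y\<bar> > x} \<inter> space M" by auto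
  then have "emeasure M {\<omega>\<in>space M. \<bar>X \<omega>\<bar> > x} = (\<integral>\<^sup>+y. ennreal (normal_density 0 \<sigma> y) * indicator {y. \<bar>y\<bar> > x} y \<partial>lborel)"
    using distributed_emeasure[OF d, of "{y. \<bar>y\<bar> > x}"] by simp
  also have "\<dots> \<le> (\<integral>\<^sup>+y. ennreal (normal_density 0 \<sigma> y * exp (l * y - l * x)) + ennreal (normal_density 0 \<sigma> (-y) * exp (l * (-y) - l * x)) \<partial>lborel)"
  proof (rule nn_integral_mono)
    fix y
    have sym: "normal_density 0 \<sigma> (-y) = normal_density 0 \<sigma> y" by (simp add: normal_density_def)
    show "ennreal (normal_density 0 \<sigma> y) * indicator {y. \<bar>y\<bar> > x} y \<le> ennreal (normal_density 0 \<sigma> y * exp (l * y - l * x)) + ennreal (normal_density 0 \<sigma> (-y) * exp (l * (-y) - l * x))"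
    proof (cases "\<bar>y\<bar> > x")
      case True
      then have "l * (y - x) \<ge> 0 \<or> l * (-y - x) \<ge> 0"
        using l0 by (cases "y \<ge> 0") (auto intro!: mult_nonneg_nonneg)
      then have "l * y - l * x \<ge> 0 \<or> l * (-y) - l * x \<ge> 0" by (simp add: algebra_simps)
      then have ee: "exp (l * y - l * x) \<ge> 1 \<or> exp (l * (-y) - l * x) \<ge> 1" by auto
      then have "normal_density 0 \<sigma> y \<le> normal_density 0 \<sigma> y * exp (l * y - l * x) + normal_density 0 \<sigma> (-y) * exp (l * (-y) - l * x)"
        unfolding sym
      proof -
        have n0: "normal_density 0 \<sigma> y \<ge> 0" by simp
        have "normal_density 0 \<sigma> y * 1 \<le> normal_density 0 \<sigma> y * exp (l * y - l * x) \<or> normal_density 0 \<sigma> y * 1 \<le> normal_density 0 \<sigma> y * exp (l * (-y) - l * x)"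
          using ee n0 mult_left_mono[of 1 "exp (l*y - l*x)" "normal_density 0 \<sigma> y"] mult_left_mono[of 1 "exp (l*(-y) - l*x)" "normal_density 0 \<sigma> y"] by blast
        moreover have "normal_density 0 \<sigma> y * exp (l * y - l * x) \<ge> 0" "normal_density 0 \<sigma> y * exp (l * (-y) - l * x) \<ge> 0" by auto
        ultimately show "normal_density 0 \<sigma> y \<le> normal_density 0 \<sigma> y * exp (l * y - l * x) + normal_density 0 \<sigma> y * exp (l * (-y) - l * x)" by linarith
      qed
      then show ?thesis using True by (simp add: ennreal_plus[symmetric] del: ennreal_plus)
    qed auto
  qed
  also have "\<dots> = (\<integral>\<^sup>+y. ennreal (exp (l\<^sup>2 * \<sigma>\<^sup>2 / 2 - l * x)) * ennreal (normal_density (l * \<sigma>\<^sup>2) \<sigma> y) \<partial>lborel) + (\<integral>\<^sup>+y. ennreal (exp (l\<^sup>2 * \<sigma>\<^sup>2 / 2 - l * x)) * ennreal (normal_density (l * \<sigma>\<^sup>2) \<sigma> (-y)) \<partial>lborel)"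
  proof -
    have "(\<integral>\<^sup>+y. ennreal (normal_density 0 \<sigma> y * exp (l * y - l * x)) + ennreal (normal_density 0 \<sigma> (-y) * exp (l * (-y) - l * x)) \<partial>lborel)
      = (\<integral>\<^sup>+y. ennreal (exp (l\<^sup>2 * \<sigma>\<^sup>2 / 2 - l * x) * normal_density (l * \<sigma>\<^sup>2) \<sigma> y) + ennreal (exp (l\<^sup>2 * \<sigma>\<^sup>2 / 2 - l * x) * normal_density (l * \<sigma>\<^sup>2) \<sigma> (-y)) \<partial>lborel)"
      by (simp only: nd_shift[OF s])
    also have "\<dots> = (\<integral>\<^sup>+y. ennreal (exp (l\<^sup>2 * \<sigma>\<^sup>2 / 2 - l * x) * normal_density (l * \<sigma>\<^sup>2) \<sigma> y) \<partial>lborel) + (\<integral>\<^sup>+y. ennreal (exp (l\<^sup>2 * \<sigma>\<^sup>2 / 2 - l * x) * normal_density (l * \<sigma>\<^sup>2) \<sigma> (-y)) \<partial>lborel)"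
      by (rule nn_integral_add) auto
    finally show ?thesis by (simp add: ennreal_mult)
  qed
  also have "\<dots> = ennreal (2 * exp (l\<^sup>2 * \<sigma>\<^sup>2 / 2 - l * x))"
    using s by (simp add: nn_integral_cmult nn_normal nn_normal_c nd_neg ennreal_plus[symmetric] del: ennreal_plus)
  also have "l\<^sup>2 * \<sigma>\<^sup>2 / 2 - l * x = - x\<^sup>2 / (2 * \<sigma>\<^sup>2)" using s by (simp add: l_def field_simps power2_eq_square)
  finally show ?thesis .
qed
lemma BM_facts:
  assumes "standard_BM M B"
  shows "prob_space M" "\<And>t. t \<ge> 0 \<Longrightarrow> B t \<in> borel_measurable M"
   "\<And>\<omega>. \<omega> \<in> space M \<Longrightarrow> B 0 \<omega> = 0" "\<And>\<omega>. \<omega> \<in> space M \<Longrightarrow> continuous_on {0..} (\<lambda>t. B t \<omega>)"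
   "\<And>s t. 0 \<le> s \<Longrightarrow> s < t \<Longrightarrow> distributed M lborel (\<lambda>\<omega>. B t \<omega> - B s \<omega>) (normal_density 0 (sqrt (t - s)))"
  using assms unfolding standard_BM_def by auto

lemma incr_tail:
  assumes BM: "standard_BM M B" and st: "0 \<le> s" "s < t" and x: "x \<ge> 0"
  shows "measure M {\<omega>\<in>space M. \<bar>B t \<omega> - B s \<omega>\<bar> > x} \<le> 2 * exp (- x\<^sup>2 / (2 * (t - s)))"
proof -
  interpret prob_space M using BM_facts[OF BM] by auto
  have \<sigma>: "sqrt (t - s) > 0" using st by simp
  have "emeasure M {\<omega>\<in>space M. \<bar>B t \<omega> - B s \<omega>\<bar> > x} \<le> ennreal (2 * exp (- x\<^sup>2 / (2 * (sqrt (t - s))\<^sup>2)))"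
    by (rule gauss_tail[OF BM_facts(5)[OF BM st] \<sigma> x])
  then have "measure M {\<omega>\<in>space M. \<bar>B t \<omega> - B s \<omega>\<bar> > x} \<le> enn2real (ennreal (2 * exp (- x\<^sup>2 / (2 * (sqrt (t - s))\<^sup>2))))"
    unfolding measure_def by (intro enn2real_mono) auto
  then show ?thesis using st by simp
qed

lemma dyadic_bound:
  fixes f :: "real \<Rightarrow> real" and e v :: real
  assumes f0: "f 0 = 0" and v: "v \<ge> 0"
    and inc: "\<And>k j. j < (2::nat)^k \<Longrightarrow> \<bar>f ((real j + 1) * e / 2^k) - f (real j * e / 2^k)\<bar> \<le> v/4 * (3/4)^k"
  shows "j \<le> 2^n \<Longrightarrow> \<bar>f (real j * e / 2^n)\<bar> \<le> v * (1 - (3/4)^(n+1))"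
proof (induction n arbitrary: j)
  case 0
  then have "j = 0 \<or> j = 1" by auto
  then show ?case
  proof
    assume "j = 0" then show ?thesis using f0 v by simp
  next
    assume j: "j = 1"
    have "\<bar>f ((real 0 + 1) * e / 2^0) - f (real 0 * e / 2^0)\<bar> \<le> v/4 * (3/4)^0" by (rule inc) simp
    then show ?thesis using j f0 by simp
  qed
next
  case (Suc n)
  obtain i where ji: "j = 2*i \<or> j = 2*i+1" by (metis dvd_mult_div_cancel odd_two_times_div_two_succ)
  have p: "(3/4::real)^(n+2) \<le> (3/4)^(n+1)" by (simp add: power_decreasing)
  have pt: "real (2*i) * e / 2^(Suc n) = real i * e / 2^n" by simp
  show ?case
  proof (cases "j = 2*i")
    case True
    then have "i \<le> 2^n" using Suc.prems by simp
    then have "\<bar>f (real i * e / 2^n)\<bar> \<le> v * (1 - (3/4)^(n+1))" by (rule Suc.IH)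
    also have "\<dots> \<le> v * (1 - (3/4)^(Suc n+1))" using v p by (intro mult_left_mono) auto
    finally show ?thesis using True pt by simp
  next
    case False
    then have j: "j = 2*i+1" using ji by simp
    then have "i < 2^n" using Suc.prems by simp
    then have h1: "\<bar>f (real i * e / 2^n)\<bar> \<le> v * (1 - (3/4)^(n+1))" by (intro Suc.IH) simp
    have "2*i < 2^(Suc n)" using \<open>i < 2^n\<close> by simp
    then have h2: "\<bar>f ((real (2*i) + 1) * e / 2^(Suc n)) - f (real (2*i) * e / 2^(Suc n))\<bar> \<le> v/4 * (3/4)^(Suc n)"
      by (rule inc)
    have eqp: "real j * e / 2^(Suc n) = (real (2*i) + 1) * e / 2^(Suc n)" using j by simp
    have h1': "\<bar>f (real (2*i) * e / 2^(Suc n))\<bar> \<le> v * (1 - (3/4)^(n+1))" using h1 pt by simp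
    have "\<bar>f (real j * e / 2^(Suc n))\<bar> \<le> v * (1 - (3/4)^(n+1)) + v/4 * (3/4)^(Suc n)"
      unfolding eqp using h1' h2 by linarith
    also have "\<dots> = v * (1 - (3/4)^(Suc n+1))" by (simp add: field_simps)
    finally show ?thesis .
  qed
qed

lemma cont_bound:
  fixes f :: "real \<Rightarrow> real"
  assumes cont: "continuous_on {0..} f" and e: "e > 0"
    and bnd: "\<And>n j. j \<le> (2::nat)^n \<Longrightarrow> \<bar>f (real j * e / 2^n)\<bar> \<le> v"
    and t: "0 \<le> t" "t \<le> e"
  shows "\<bar>f t\<bar> \<le> v"
proof -
  define j where "j n = nat \<lfloor>t * 2^n / e\<rfloor>" for n :: nat
  define d where "d n = real (j n) * e / 2^n" for n :: nat
  have rj: "real (j n) = of_int \<lfloor>t * 2^n / e\<rfloor>" for n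
    unfolding j_def using t e by simp
  have jle: "j n \<le> 2^n" for n
  proof -
    have "t * 2^n / e \<le> 2^n" using t e by (simp add: field_simps)
    then have "\<lfloor>t * 2^n / e\<rfloor> \<le> 2^n" by (metis floor_mono floor_numeral_power)
    then show ?thesis unfolding j_def by (simp add: nat_le_iff)
  qed
  have dle: "d n \<le> t" for n
  proof -
    have "real (j n) \<le> t * 2^n / e" unfolding rj by simp
    then show ?thesis unfolding d_def using e by (simp add: field_simps)
  qed
  have dge: "t - e / 2^n \<le> d n" for n
  proof -
    have "t * 2^n / e - 1 \<le> real (j n)" unfolding rj by linarith
    then have "(t * 2^n / e - 1) * (e / 2^n) \<le> real (j n) * (e / 2^n)"
      by (rule mult_right_mono) (use e in auto)
    moreover have "(t * 2^n / e - 1) * (e / 2^n) = t - e / 2^n" using e by (simp add: field_simps)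
    ultimately show ?thesis unfolding d_def by simp
  qed
  have d0: "d n \<ge> 0" for n unfolding d_def using e by simp
  have lim1: "(\<lambda>n. t - e / 2^n) \<longlonglongrightarrow> t" by real_asymp
  have "d \<longlonglongrightarrow> t"
    by (rule tendsto_sandwich[OF _ _ lim1 tendsto_const]) (use dle dge in auto)
  then have "(\<lambda>n. f (d n)) \<longlonglongrightarrow> f t"
    by (rule continuous_on_tendsto_compose[OF cont]) (use t d0 in auto)
  then have "(\<lambda>n. \<bar>f (d n)\<bar>) \<longlonglongrightarrow> \<bar>f t\<bar>" by (rule tendsto_rabs)
  moreover have "\<bar>f (d n)\<bar> \<le> v" for n unfolding d_def by (rule bnd[OF jle])
  ultimately show ?thesis by (intro LIMSEQ_le_const2[where X="\<lambda>n. \<bar>f (d n)\<bar>"]) auto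
qed

lemma term_bound:
  fixes a :: real assumes a: "a \<ge> 16"
  shows "2^k * (2 * exp (- a * (9/8)^k)) \<le> 2 * exp (- a) * (1/2)^k"
proof -
  have "1 + real k * (1/8) \<le> (1 + 1/8 :: real)^k" by (rule Bernoulli_inequality) simp
  then have b1: "a * (1 + real k * (1/8)) \<le> a * (9/8)^k" using a by (intro mult_left_mono) auto
  have "16 * real k \<le> a * real k" using a by (intro mult_right_mono) auto
  then have b: "a + 2 * real k \<le> a * (9/8)^k" using b1 by (simp add: algebra_simps)
  have "exp (- a * (9/8)^k) \<le> exp (- a - 2 * real k)" using b by simp
  also have "\<dots> = exp (- a) * exp (-2) ^ k"
  proof -
    have "- a - 2 * real k = - a + real k * (-2)" by simp
    then show ?thesis by (simp only: exp_add exp_of_nat_mult)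
  qed
  finally have "2^k * (2 * exp (- a * (9/8)^k)) \<le> 2^k * (2 * (exp (- a) * exp (-2) ^ k))" by simp
  also have "\<dots> = 2 * exp (- a) * (2 * exp (-2)) ^ k" by (simp only: power_mult_distrib mult_ac)
  also have "\<dots> \<le> 2 * exp (- a) * (1/2)^k"
  proof -
    have "exp (1::real) \<ge> 2" using exp_ge_add_one_self[of 1] by simp
    then have "exp (2::real) \<ge> 4" using exp_add[of "1::real" 1] mult_mono[of 2 "exp (1::real)" 2 "exp 1"] by simp
    then have "2 * exp (-2::real) \<le> 1/2" by (simp add: exp_minus field_simps)
    then show ?thesis by (intro mult_left_mono power_mono) auto
  qed
  finally show ?thesis .
qed

lemma sup_tail:
  assumes BM: "standard_BM M B" and e: "0 < e" and v: "v > 0" and a16: "v\<^sup>2 / (32 * e) \<ge> 16"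
    and S: "S \<subseteq> {\<omega>\<in>space M. \<exists>t\<in>{0..e}. \<bar>B t \<omega>\<bar> > v}"
  shows "measure M S \<le> 4 * exp (- (v\<^sup>2 / (32 * e)))"
proof -
  interpret prob_space M using BM_facts[OF BM] by auto
  define a where "a = v\<^sup>2 / (32 * e)"
  define I where "I k j = {\<omega>\<in>space M. \<bar>B ((real j + 1) * e / 2^k) \<omega> - B (real j * e / 2^k) \<omega>\<bar> > v/4 * (3/4)^k}" for k j :: nat
  define A where "A k = (\<Union>j<2^k. I k j)" for k :: nat
  define b where "b k = 2 * exp (- a) * (1/2::real)^k" for k :: nat
  have Isets: "I k j \<in> sets M" for k j
  proof -
    have m1[measurable]: "B ((real j + 1) * e / 2^k) \<in> borel_measurable M" by (rule BM_facts(2)[OF BM]) (use e in simp)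
    have m2[measurable]: "B (real j * e / 2^k) \<in> borel_measurable M" by (rule BM_facts(2)[OF BM]) (use e in simp)
    show ?thesis unfolding I_def by measurable
  qed
  have Asets: "A k \<in> sets M" for k unfolding A_def using Isets by auto
  have Imeas: "measure M (I k j) \<le> 2 * exp (- a * (9/8)^k)" for k j
  proof -
    have h: "measure M (I k j) \<le> 2 * exp (- (v/4 * (3/4)^k)\<^sup>2 / (2 * ((real j + 1) * e / 2^k - real j * e / 2^k)))"
      unfolding I_def by (rule incr_tail[OF BM]) (use e v in \<open>auto simp: field_simps\<close>)
    have eqx0: "(v/4 * (3/4)^k)\<^sup>2 / (2 * ((real j + 1) * e / 2^k - real j * e / 2^k)) = a * (9/8)^k"
    proof -
      define q :: real where "q = (3/4)^k"
      define p :: real where "p = 2^k"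
      have p0: "p > 0" unfolding p_def by simp
      have d: "(real j + 1) * e / 2^k - real j * e / 2^k = e / p" unfolding p_def by (simp add: field_simps)
      have q2: "q * q * p = (9/8)^k" unfolding q_def p_def by (simp add: power_mult_distrib[symmetric])
      have "(v/4 * q)\<^sup>2 / (2 * (e / p)) = v\<^sup>2 / (32 * e) * (q * q * p)"
        using e p0 by (simp add: field_simps power2_eq_square)
      then show ?thesis unfolding d a_def q2[symmetric] q_def .
    qed
    have "- (v/4 * (3/4)^k)\<^sup>2 / (2 * ((real j + 1) * e / 2^k - real j * e / 2^k)) = - (a * (9/8)^k)"
      using eqx0 by (metis minus_divide_left)
    then show ?thesis using h by simp
  qed
  have Ameas: "measure M (A k) \<le> b k" for k
  proof -
    have "measure M (A k) \<le> (\<Sum>j<2^k. measure M (I k j))"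
      unfolding A_def by (rule finite_measure_subadditive_finite) (use Isets in auto)
    also have "\<dots> \<le> (\<Sum>j<(2::nat)^k. 2 * exp (- a * (9/8)^k))" by (intro sum_mono Imeas)
    also have "\<dots> = 2^k * (2 * exp (- a * (9/8)^k))" by simp
    also have "\<dots> \<le> b k" unfolding b_def by (rule term_bound) (use a16 a_def in simp)
    finally show ?thesis .
  qed
  have bsum: "b sums (4 * exp (- a))"
  proof -
    have "(\<lambda>k. (1/2::real)^k) sums (1 / (1 - 1/2))" by (rule geometric_sums) simp
    from sums_mult[OF this, of "2 * exp (- a)"] show ?thesis unfolding b_def by simp
  qed
  have summ: "summable (\<lambda>k. measure M (A k))"
    by (rule summable_comparison_test'[OF sums_summable[OF bsum]]) (use Ameas in auto)
  have sub: "{\<omega>\<in>space M. \<exists>t\<in>{0..e}. \<bar>B t \<omega>\<bar> > v} \<subseteq> (\<Union>k. A k)"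
  proof
    fix \<omega> assume w: "\<omega> \<in> {\<omega>\<in>space M. \<exists>t\<in>{0..e}. \<bar>B t \<omega>\<bar> > v}"
    then obtain t where t: "t \<in> {0..e}" "\<bar>B t \<omega>\<bar> > v" and sp: "\<omega> \<in> space M" by auto
    show "\<omega> \<in> (\<Union>k. A k)"
    proof (rule ccontr)
      assume "\<omega> \<notin> (\<Union>k. A k)"
      then have inc: "\<And>k j. j < (2::nat)^k \<Longrightarrow> \<bar>B ((real j + 1) * e / 2^k) \<omega> - B (real j * e / 2^k) \<omega>\<bar> \<le> v/4 * (3/4)^k"
        using sp unfolding A_def I_def by force
      have dy: "\<bar>B (real j * e / 2^n) \<omega>\<bar> \<le> v" if "j \<le> 2^n" for n j
      proof -
        have "\<bar>B (real j * e / 2^n) \<omega>\<bar> \<le> v * (1 - (3/4)^(n+1))"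
          by (rule dyadic_bound[where f="\<lambda>t. B t \<omega>", OF BM_facts(3)[OF BM sp] _ inc that]) (use v in auto)
        also have "\<dots> \<le> v" using v by (simp add: mult_left_le)
        finally show ?thesis .
      qed
      have "\<bar>B t \<omega>\<bar> \<le> v"
        using cont_bound[where f="\<lambda>t. B t \<omega>", OF BM_facts(4)[OF BM sp] e dy] t by auto
      then show False using t by simp
    qed
  qed
  have "measure M S \<le> measure M (\<Union>k. A k)"
    by (rule finite_measure_mono[OF order_trans[OF S sub]]) (use Asets in auto)
  also have "\<dots> \<le> (\<Sum>k. measure M (A k))"
    by (rule finite_measure_subadditive_countably) (use Asets summ in auto)
  also have "\<dots> \<le> (\<Sum>k. b k)" by (rule suminf_le[OF Ameas summ sums_summable[OF bsum]])
  also have "\<dots> = 4 * exp (- a)" using bsum by (simp add: sums_iff)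
  finally show ?thesis unfolding a_def .
qed

lemma asymp_aux:
  fixes \<delta> c :: real assumes d: "\<delta> > 0"
  shows "(\<lambda>u. 4 * exp (- 2 * \<delta> * (u - c)\<^sup>2)) \<in> o(\<lambda>u. exp (- \<delta> * u\<^sup>2))"
proof (rule smalloI_tendsto)
  show "eventually (\<lambda>u. exp (- \<delta> * u\<^sup>2) \<noteq> 0) at_top" by simp
  have lim: "((\<lambda>u::real. 4 * exp (- u)) \<longlongrightarrow> 0) at_top" by real_asymp
  have ev: "eventually (\<lambda>u. 4 * exp (- 2 * \<delta> * (u - c)\<^sup>2) / exp (- \<delta> * u\<^sup>2) \<le> 4 * exp (- u)) at_top"
    using eventually_ge_at_top[of "4 * \<bar>c\<bar> + 1 / \<delta>"]
  proof eventually_elim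
    case (elim u)
    have u0: "u \<ge> 0" using elim d by (smt (verit) divide_pos_pos)
    have "\<delta> * u \<ge> \<delta> * (4 * \<bar>c\<bar> + 1 / \<delta>)" using elim d by (intro mult_left_mono) auto
    moreover have "\<delta> * (4 * \<bar>c\<bar> + 1 / \<delta>) = 4 * \<delta> * \<bar>c\<bar> + 1" using d by (simp add: distrib_left)
    ultimately have du: "\<delta> * u \<ge> 4 * \<delta> * \<bar>c\<bar> + 1" by linarith
    then have "(\<delta> * u) * u \<ge> (4 * \<delta> * \<bar>c\<bar> + 1) * u" by (rule mult_right_mono) (use u0 in auto)
    then have A: "\<delta> * u * u \<ge> 4 * \<delta> * (\<bar>c\<bar> * u) + u" by (simp add: algebra_simps)
    have "c * u \<le> \<bar>c\<bar> * u" using u0 by (intro mult_right_mono) auto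
    then have B: "\<delta> * (c * u) \<le> \<delta> * (\<bar>c\<bar> * u)" using d by (intro mult_left_mono) auto
    have C: "\<delta> * (c * c) \<ge> 0" using d by simp
    have E: "- 2 * \<delta> * (u - c)\<^sup>2 - (- \<delta> * u\<^sup>2) = - (\<delta> * u * u) + 4 * (\<delta> * (c * u)) - 2 * (\<delta> * (c * c))"
      by (simp add: power2_eq_square algebra_simps)
    have "- 2 * \<delta> * (u - c)\<^sup>2 - (- \<delta> * u\<^sup>2) \<le> - u" unfolding E using A B C by linarith
    then have "exp (- 2 * \<delta> * (u - c)\<^sup>2 - (- \<delta> * u\<^sup>2)) \<le> exp (- u)" by simp
    moreover have "4 * exp (- 2 * \<delta> * (u - c)\<^sup>2) / exp (- \<delta> * u\<^sup>2) = 4 * exp (- 2 * \<delta> * (u - c)\<^sup>2 - (- \<delta> * u\<^sup>2))"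
      by (simp only: exp_diff)
    ultimately show ?case by simp
  qed
  show "((\<lambda>u. 4 * exp (- 2 * \<delta> * (u - c)\<^sup>2) / exp (- \<delta> * u\<^sup>2)) \<longlongrightarrow> 0) at_top"
    by (rule tendsto_sandwich[OF _ ev tendsto_const lim]) simp
qed

lemma aux3: fixes g w v c x y :: real shows "- (g * w) \<le> 2 * (v + c) \<Longrightarrow> \<bar>x\<bar> \<le> v \<Longrightarrow> \<bar>y\<bar> \<le> c \<Longrightarrow> x - y - g * w \<le> 3 * v + 3 * c"
  by (auto simp: abs_le_iff)

theorem lemma3p2:
  fixes M :: "'a measure" and B1 B2 :: "real \<Rightarrow> 'a \<Rightarrow> real"
    and c1 c2 \<gamma>1 \<gamma>2 a \<delta> :: real
  assumes "standard_BM M B1" and "standard_BM M B2"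
    and "indep_processes M B1 B2"
    and "0 \<le> \<gamma>1" and "\<gamma>1 < 2" and "0 \<le> \<gamma>2" and "\<gamma>2 < 2"
    and "a \<le> 1" and "\<delta> > 0"
  shows "\<exists>\<epsilon>. 0 < \<epsilon> \<and> \<epsilon> < 1 \<and>
    (\<lambda>u. measure M {\<omega> \<in> space M. \<exists>t s1 s2. (t, s1, s2) \<in> A_set \<epsilon> \<and>
        B1 t \<omega> - c1 * t - \<gamma>1 * (B1 s1 \<omega> - c1 * s1) > u \<and>
        B2 t \<omega> - c2 * t - \<gamma>2 * (B2 s2 \<omega> - c2 * s2) > a * u})
    \<in> o(\<lambda>u. exp (- \<delta> * u\<^sup>2))"
proof -
  note BM = assms(1)
  interpret prob_space M using BM_facts[OF BM] by auto
  define \<epsilon> where "\<epsilon> = 1 / (576 * \<delta> + 2)"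
  define c where "c = \<bar>c1\<bar>"
  have e0: "0 < \<epsilon>" and e1: "\<epsilon> \<le> 1/2" using assms(9) unfolding \<epsilon>_def by (auto simp: field_simps)
  define E where "E u = {\<omega> \<in> space M. \<exists>t s1 s2. (t, s1, s2) \<in> A_set \<epsilon> \<and>
        B1 t \<omega> - c1 * t - \<gamma>1 * (B1 s1 \<omega> - c1 * s1) > u \<and>
        B2 t \<omega> - c2 * t - \<gamma>2 * (B2 s2 \<omega> - c2 * s2) > a * u}" for u
  have bound: "measure M (E u) \<le> 4 * exp (- 2 * \<delta> * (u - 3 * c)\<^sup>2)" if u: "u \<ge> 3 * c + 1536" for u
  proof -
    define v where "v = (u - 3 * c) / 3"
    have v512: "v \<ge> 512" using u unfolding v_def by simp
    have v0: "v > 0" using v512 by simp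
    have a16: "v\<^sup>2 / (32 * \<epsilon>) \<ge> 16"
    proof -
      have "512 * 512 \<le> v * v" using v512 mult_mono[of 512 v 512 v] by simp
      then have "v\<^sup>2 \<ge> 512 * 512" by (simp add: power2_eq_square)
      then have "v\<^sup>2 \<ge> 512 * \<epsilon>" using e1 e0 by linarith
      then show ?thesis using e0 by (simp add: field_simps)
    qed
    have sub: "E u \<subseteq> {\<omega>\<in>space M. \<exists>t\<in>{0..\<epsilon>}. \<bar>B1 t \<omega>\<bar> > v}"
    proof
      fix \<omega> assume "\<omega> \<in> E u"
      then obtain t s1 s2 where sp: "\<omega> \<in> space M" and ts: "(t, s1, s2) \<in> A_set \<epsilon>"
        and ineq: "B1 t \<omega> - c1 * t - \<gamma>1 * (B1 s1 \<omega> - c1 * s1) > u" unfolding E_def by blast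
      have t: "0 \<le> t" "t \<le> \<epsilon>" "t \<le> 1" and s: "0 \<le> s1" "s1 \<le> t" using ts unfolding A_set_def by auto
      show "\<omega> \<in> {\<omega>\<in>space M. \<exists>t\<in>{0..\<epsilon>}. \<bar>B1 t \<omega>\<bar> > v}"
      proof (rule ccontr)
        assume "\<omega> \<notin> {\<omega>\<in>space M. \<exists>t\<in>{0..\<epsilon>}. \<bar>B1 t \<omega>\<bar> > v}"
        then have all: "\<And>x. 0 \<le> x \<Longrightarrow> x \<le> \<epsilon> \<Longrightarrow> \<bar>B1 x \<omega>\<bar> \<le> v" using sp by (auto simp: not_less)
        have h: "\<bar>B1 t \<omega>\<bar> \<le> v" "\<bar>B1 s1 \<omega>\<bar> \<le> v"
          using all[of t] all[of s1] t s by linarith+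
        have "\<bar>c1 * t\<bar> \<le> c" unfolding c_def using t by (simp add: abs_mult mult_left_le)
        moreover have "\<bar>c1 * s1\<bar> \<le> c" unfolding c_def using t s by (simp add: abs_mult mult_left_le)
        ultimately have "\<bar>B1 s1 \<omega> - c1 * s1\<bar> \<le> v + c" using h by linarith
        then have "\<gamma>1 * \<bar>B1 s1 \<omega> - c1 * s1\<bar> \<le> 2 * (v + c)"
          using assms(4,5) by (intro mult_mono) auto
        moreover have "\<gamma>1 * (- (B1 s1 \<omega> - c1 * s1)) \<le> \<gamma>1 * \<bar>B1 s1 \<omega> - c1 * s1\<bar>"
          using assms(4) by (intro mult_left_mono) auto
        ultimately have "- (\<gamma>1 * (B1 s1 \<omega> - c1 * s1)) \<le> 2 * (v + c)" by (simp only: mult_minus_left mult_minus_right)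
        then have "B1 t \<omega> - c1 * t - \<gamma>1 * (B1 s1 \<omega> - c1 * s1) \<le> 3 * v + 3 * c"
          using aux3[OF _ h(1) \<open>\<bar>c1 * t\<bar> \<le> c\<close>] by simp
        also have "\<dots> = u" unfolding v_def by (simp add: field_simps)
        finally show False using ineq by simp
      qed
    qed
    have "measure M (E u) \<le> 4 * exp (- (v\<^sup>2 / (32 * \<epsilon>)))" by (rule sup_tail[OF BM e0 v0 a16 sub])
    also have "\<dots> \<le> 4 * exp (- 2 * \<delta> * (u - 3 * c)\<^sup>2)"
    proof -
      have "v\<^sup>2 / (32 * \<epsilon>) = (u - 3 * c)\<^sup>2 * ((576 * \<delta> + 2) / 288)"
        unfolding v_def \<epsilon>_def using assms(9) by (simp add: field_simps power2_eq_square)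
      also have "\<dots> \<ge> (u - 3 * c)\<^sup>2 * (2 * \<delta>)" by (intro mult_left_mono) auto
      finally show ?thesis by (simp add: mult.commute)
    qed
    finally show ?thesis .
  qed
  have "(\<lambda>u. measure M (E u)) \<in> O(\<lambda>u. 4 * exp (- 2 * \<delta> * (u - 3 * c)\<^sup>2))"
  proof (rule bigoI[where c=1])
    show "eventually (\<lambda>u. norm (measure M (E u)) \<le> 1 * norm (4 * exp (- 2 * \<delta> * (u - 3 * c)\<^sup>2))) at_top"
      using eventually_ge_at_top[of "3 * c + 1536"] by eventually_elim (use bound in auto)
  qed
  also have "(\<lambda>u. 4 * exp (- 2 * \<delta> * (u - 3 * c)\<^sup>2)) \<in> o(\<lambda>u. exp (- \<delta> * u\<^sup>2))"
    using asymp_aux[OF assms(9), of "3 * c"] .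
  finally have "(\<lambda>u. measure M (E u)) \<in> o(\<lambda>u. exp (- \<delta> * u\<^sup>2))" .
  moreover have "\<epsilon> < 1" using e1 by simp
  ultimately show ?thesis using e0 unfolding E_def by blast
qed

end
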